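(* Let $n\ge1$ and $k$ be integers. If the complete bipartite graph $K_{n,n}$ is $k$-removable, then $k> n-\sqrt{2n(\log n+1)}$.
   Context: $\log$ is the natural logarithm. For a graph $G$, $f:V(G)\to\mathbb Z$, $u\in V(G)$ and $W\subseteq N(u)$, $\mathsf{DelSave}(G,f,u,W)$ outputs $G'=G-u$ and $f'$ with $f'(x)=f(x)-1$ for $x\in N(u)\setminus W$ and $f'(x)=f(x)$ otherwise; it is legal if $f(u)>\sum_{w\in W}f(w)$ and $f'(x)\ge1$ for all $x\in V(G')$. $G$ is $f$-removable if all vertices can be deleted by successive legal $\mathsf{DelSave}$ applications, each time replacing $(G,f)$ by the output; $G$ is $k$-removable if it is $f$-removable for the constant function $f\equiv k$. *)

theory Defs
  imports "HOL-Analysis.Analysis"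
begin

text \<open>A finite simple graph is given by a vertex set V and a symmetric irreflexive
 edge relation E (only edges inside V matter).  Neighbourhood of u in (V,E):\<close>

definition nbhd :: "'a set \<Rightarrow> ('a \<Rightarrow> 'a \<Rightarrow> bool) \<Rightarrow> 'a \<Rightarrow> 'a set" where
  "nbhd V E u = {x \<in> V. x \<noteq> u \<and> E u x}"

definition delsave_fun ::
  "'a set \<Rightarrow> ('a \<Rightarrow> 'a \<Rightarrow> bool) \<Rightarrow> ('a \<Rightarrow> int) \<Rightarrow> 'a \<Rightarrow> 'a set \<Rightarrow> ('a \<Rightarrow> int)" where
  "delsave_fun V E f u W = (\<lambda>x. if x \<in> nbhd V E u - W then f x - 1 else f x)"

definition delsave_legal ::
  "'a set \<Rightarrow> ('a \<Rightarrow> 'a \<Rightarrow> bool) \<Rightarrow> ('a \<Rightarrow> int) \<Rightarrow> 'a \<Rightarrow> 'a set \<Rightarrow> bool" where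
  "delsave_legal V E f u W \<longleftrightarrow>
     u \<in> V \<and> W \<subseteq> nbhd V E u \<and> f u > (\<Sum>w\<in>W. f w) \<and>
     (\<forall>x \<in> V - {u}. delsave_fun V E f u W x \<ge> 1)"

text \<open>f-removability: all vertices can be deleted by successive legal DelSave steps.
 (The edge relation of G - u is E restricted to V - {u}, which is implicit since
 only vertices in the current vertex set are ever considered.)\<close>

inductive f_removable :: "'a set \<Rightarrow> ('a \<Rightarrow> 'a \<Rightarrow> bool) \<Rightarrow> ('a \<Rightarrow> int) \<Rightarrow> bool" where
  empty: "f_removable {} E f"
| step: "delsave_legal V E f u W \<Longrightarrow>
         f_removable (V - {u}) E (delsave_fun V E f u W) \<Longrightarrow> f_removable V E f"

definition k_removable :: "'a set \<Rightarrow> ('a \<Rightarrow> 'a \<Rightarrow> bool) \<Rightarrow> int \<Rightarrow> bool" where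
  "k_removable V E k \<longleftrightarrow> f_removable V E (\<lambda>_. k)"

definition Knn_vertices :: "nat \<Rightarrow> (bool \<times> nat) set" where
  "Knn_vertices n = UNIV \<times> {..<n}"

definition Knn_edges :: "bool \<times> nat \<Rightarrow> bool \<times> nat \<Rightarrow> bool" where
  "Knn_edges x y \<longleftrightarrow> fst x \<noteq> fst y"

end

theory Submission
  imports Defs
begin

definition cnt :: "(bool \<times> nat) set \<Rightarrow> bool \<Rightarrow> nat" where
  "cnt V b = card {x\<in>V. fst x = b}"

definition Zr :: "real \<Rightarrow> real \<Rightarrow> real" where
  "Zr P Q = P*Q - Q*ln(P+1) - P*ln(Q+1)"

definition Ur :: "int \<Rightarrow> int \<Rightarrow> int \<Rightarrow> real" where
  "Ur d p q = real_of_int ((d+1)*(p+q) - p*q)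
     + Zr (of_int (max (p-d-1) 0)) (of_int (max (q-d-1) 0))"

lemma Ur_sym: "Ur d p q = Ur d q p"
  by (simp add: Ur_def Zr_def algebra_simps)

lemma ln_step:
  fixes P :: real
  assumes "P \<ge> 1"
  shows "1/(P+1) \<le> ln(P+1) - ln P"
proof -
  have "ln (P/(P+1)) \<le> P/(P+1) - 1"
    using assms by (intro ln_le_minus_one) auto
  moreover have "ln (P/(P+1)) = ln P - ln (P+1)"
    using assms by (simp add: ln_div)
  moreover have "P/(P+1) - 1 = - (1/(P+1))"
    using assms by (simp add: field_simps)
  ultimately show ?thesis by linarith
qed

lemma step_ineq:
  fixes d p q f w :: int
  assumes "p \<ge> 1" "q \<ge> 0" "f \<ge> 1" "f \<ge> q - d" "w \<ge> 0" "w * max (p-d) 1 \<le> f - 1"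
  shows "Ur d p q - Ur d (p-1) q \<le> of_int (f + d - q - w)"
proof -
  define P where "P = p - d - 1"
  define Q where "Q = q - d - 1"
  have poly: "real_of_int ((d+1)*(p+q) - p*q) - real_of_int ((d+1)*(p-1+q) - (p-1)*q)
      = of_int (d + 1 - q)"
    by (simp add: algebra_simps)
  have wle: "w \<le> f - 1"
  proof -
    have "w * 1 \<le> w * max (p-d) 1" using assms(5) by (intro mult_left_mono) auto
    then show ?thesis using assms(6) by simp
  qed
  have dZ: "Zr (of_int (max P 0)) (of_int (max Q 0)) - Zr (of_int (max (P-1) 0)) (of_int (max Q 0))
      \<le> of_int (f - 1 - w)"
  proof (cases "P \<le> 0 \<or> Q \<le> 0")
    case True
    then show ?thesis
    proof
      assume "P \<le> 0" then show ?thesis using wle by (simp add: Zr_def)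
    next
      assume "Q \<le> 0" then show ?thesis using wle by (simp add: Zr_def)
    qed
  next
    case False
    then have P1: "P \<ge> 1" and Q1: "Q \<ge> 1" by auto
    have e: "Zr (of_int (max P 0)) (of_int (max Q 0)) - Zr (of_int (max (P-1) 0)) (of_int (max Q 0))
       = real_of_int Q - real_of_int Q * (ln (real_of_int P + 1) - ln (real_of_int P)) - ln (real_of_int Q + 1)"
      using P1 Q1 by (simp add: Zr_def max_def algebra_simps)
    have l1: "1/(real_of_int P + 1) \<le> ln (real_of_int P + 1) - ln (real_of_int P)"
      using ln_step[of "real_of_int P"] P1 by simp
    have l2: "ln (real_of_int Q + 1) \<ge> (0::real)" using Q1 by simp
    have A: "real_of_int Q * (1/(real_of_int P + 1)) \<le> real_of_int Q * (ln (real_of_int P + 1) - ln (real_of_int P))"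
      using l1 Q1 by (intro mult_left_mono) auto
    have D: "max (p-d) 1 = P + 1" using P1 unfolding P_def by simp
    have wP: "real_of_int w * (real_of_int P + 1) \<le> real_of_int f - 1"
      using assms(6) D by (metis of_int_1 of_int_add of_int_diff of_int_le_iff of_int_mult)
    have fQ: "real_of_int f - 1 \<ge> real_of_int Q" using assms(4) unfolding Q_def by simp
    have Ppos: "real_of_int P + 1 > 0" using P1 by simp
    have "real_of_int w \<le> (real_of_int f - 1) / (real_of_int P + 1)"
      using wP Ppos by (simp add: field_simps)
    then have "real_of_int f - 1 - w \<ge> (real_of_int f - 1) - (real_of_int f - 1)/(real_of_int P + 1)" by simp
    also have "(real_of_int f - 1) - (real_of_int f - 1)/(real_of_int P + 1) = (real_of_int f - 1) * (real_of_int P / (real_of_int P + 1))"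
      using Ppos by (simp add: field_simps)
    also have "... \<ge> real_of_int Q * (real_of_int P / (real_of_int P + 1))"
      using fQ P1 by (intro mult_right_mono) auto
    finally have R: "real_of_int f - 1 - w \<ge> real_of_int Q * (real_of_int P / (real_of_int P + 1))" .
    have "real_of_int Q * (real_of_int P / (real_of_int P + 1)) = real_of_int Q - real_of_int Q * (1/(real_of_int P + 1))"
      using Ppos by (simp add: field_simps)
    then show ?thesis using e A l2 R by simp
  qed
  have "Ur d p q - Ur d (p-1) q = of_int (d + 1 - q)
      + (Zr (of_int (max P 0)) (of_int (max Q 0)) - Zr (of_int (max (P-1) 0)) (of_int (max Q 0)))"
    unfolding Ur_def P_def Q_def using poly by (simp add: algebra_simps)
  then show ?thesis using dZ by simp
qed


lemma nbhd_Knn: "nbhd V Knn_edges u = {x\<in>V. fst x \<noteq> fst u}"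
  by (auto simp: nbhd_def Knn_edges_def)

lemma cnt_remove:
  assumes "finite V" "u \<in> V"
  shows "cnt (V - {u}) (fst u) = cnt V (fst u) - 1"
    and "cnt (V - {u}) (\<not> fst u) = cnt V (\<not> fst u)"
    and "cnt V (fst u) \<ge> 1"
proof -
  have "{x \<in> V - {u}. fst x = fst u} = {x\<in>V. fst x = fst u} - {u}" by auto
  then show "cnt (V - {u}) (fst u) = cnt V (fst u) - 1"
    using assms by (simp add: cnt_def)
  have "{x \<in> V - {u}. fst x = (\<not> fst u)} = {x\<in>V. fst x = (\<not> fst u)}" by auto
  then show "cnt (V - {u}) (\<not> fst u) = cnt V (\<not> fst u)" by (simp add: cnt_def)
  have "1 \<le> card {x\<in>V. fst x = fst u}"
    using card_mono[of "{x\<in>V. fst x = fst u}" "{u}"] assms by auto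
  then show "cnt V (fst u) \<ge> 1" by (simp add: cnt_def)
qed

lemma main:
  assumes "f_removable V E f"
  shows "E = Knn_edges \<Longrightarrow> finite V \<Longrightarrow> d \<ge> 0 \<Longrightarrow>
    (\<forall>v\<in>V. f v \<ge> 1 \<and> f v + d \<ge> int (cnt V (\<not> fst v))) \<Longrightarrow>
    Ur d (int (cnt V True)) (int (cnt V False))
      \<le> of_int (\<Sum>v\<in>V. f v + d - int (cnt V (\<not> fst v)))"
  using assms
proof (induction rule: f_removable.induct)
  case (empty E f)
  then show ?case by (simp add: Ur_def Zr_def cnt_def)
next
  case (step V E f u W)
  define f' where "f' = delsave_fun V E f u W"
  define b where "b = fst u"
  have E: "E = Knn_edges" using step by simp
  have fin: "finite V" using step by simp
  have leg: "u \<in> V" "W \<subseteq> nbhd V E u" "f u > (\<Sum>w\<in>W. f w)"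
     "\<forall>x \<in> V - {u}. f' x \<ge> 1"
    using step(1) unfolding delsave_legal_def f'_def by auto
  have nb: "nbhd V E u = {x\<in>V. fst x \<noteq> b}" using E nbhd_Knn b_def by simp
  have Wsub: "W \<subseteq> V - {u}" using leg(2) nb b_def by auto
  have finW: "finite W" using Wsub fin finite_subset by blast
  have inv: "\<forall>v\<in>V. f v \<ge> 1 \<and> f v + d \<ge> int (cnt V (\<not> fst v))" using step by simp
  have c1: "cnt (V - {u}) b = cnt V b - 1" "cnt (V - {u}) (\<not> b) = cnt V (\<not> b)"
     "cnt V b \<ge> 1"
    using cnt_remove[OF fin leg(1)] b_def by auto
  have f'def: "\<And>x. f' x = (if x \<in> V \<and> fst x \<noteq> b \<and> x \<notin> W then f x - 1 else f x)"
    unfolding f'_def delsave_fun_def using nb by auto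
  define sig where "sig = (\<lambda>x. f x + d - int (cnt V (\<not> fst x)))"
  define sig' where "sig' = (\<lambda>x. f' x + d - int (cnt (V - {u}) (\<not> fst x)))"
  have sigeq: "\<And>x. x \<in> V - {u} \<Longrightarrow> sig' x = sig x + (if x \<in> W then 1 else 0)"
  proof -
    fix x assume x: "x \<in> V - {u}"
    show "sig' x = sig x + (if x \<in> W then 1 else 0)"
    proof (cases "fst x = b")
      case True
      then have "x \<notin> W" using Wsub leg(2) nb by auto
      then show ?thesis using True c1 unfolding sig'_def sig_def f'def by simp
    next
      case False
      then have nf: "(\<not> fst x) = b" by auto
      have "int (cnt (V - {u}) b) = int (cnt V b) - 1" using c1 by simp
      then show ?thesis using False x nf unfolding sig'_def sig_def f'def by auto
    qed
  qed
  have inv': "\<forall>v\<in>V - {u}. f' v \<ge> 1 \<and> f' v + d \<ge> int (cnt (V - {u}) (\<not> fst v))"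
  proof
    fix v assume v: "v \<in> V - {u}"
    have "sig' v \<ge> sig v" using sigeq[OF v] by simp
    moreover have "sig v \<ge> 0" using inv v unfolding sig_def by auto
    ultimately show "f' v \<ge> 1 \<and> f' v + d \<ge> int (cnt (V - {u}) (\<not> fst v))"
      using leg(4) v unfolding sig'_def by auto
  qed
  have IH: "Ur d (int (cnt (V - {u}) True)) (int (cnt (V - {u}) False))
      \<le> of_int (\<Sum>v\<in>V - {u}. sig' v)"
    using step.IH[OF E] fin inv' step.prems(3) unfolding sig'_def f'_def by auto
  have sum1: "(\<Sum>v\<in>V - {u}. sig' v) = (\<Sum>v\<in>V - {u}. sig v) + int (card W)"
  proof -
    have "(\<Sum>v\<in>V - {u}. sig' v) = (\<Sum>v\<in>V - {u}. sig v + (if v \<in> W then 1 else 0))"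
      using sigeq by (intro sum.cong) auto
    also have "... = (\<Sum>v\<in>V - {u}. sig v) + (\<Sum>v\<in>V - {u}. (if v \<in> W then 1 else 0))"
      by (simp add: sum.distrib)
    also have "(\<Sum>v\<in>V - {u}. (if v \<in> W then 1 else 0)) = int (card W)"
    proof -
      have "(\<Sum>v\<in>V - {u}. (if v \<in> W then 1 else 0::int)) = (\<Sum>v\<in>(V - {u}) \<inter> W. 1)"
        using sum.inter_restrict[of "V-{u}" "\<lambda>_. (1::int)" W] fin by simp
      also have "(V - {u}) \<inter> W = W" using Wsub by auto
      finally show ?thesis by simp
    qed
    finally show ?thesis .
  qed
  have sum2: "(\<Sum>v\<in>V. sig v) = sig u + (\<Sum>v\<in>V - {u}. sig v)"
    using fin leg(1) by (simp add: sum.remove)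
  define D where "D = max (int (cnt V b) - d) 1"
  have Wbound: "int (card W) * D \<le> f u - 1"
  proof -
    have "\<And>w. w \<in> W \<Longrightarrow> D \<le> f w"
    proof -
      fix w assume w: "w \<in> W"
      then have "w \<in> V" "fst w \<noteq> b" using Wsub leg(2) nb by auto
      then have "(\<not> fst w) = b" by auto
      then show "D \<le> f w" using inv \<open>w \<in> V\<close> unfolding D_def by force
    qed
    then have "(\<Sum>w\<in>W. D) \<le> (\<Sum>w\<in>W. f w)" by (intro sum_mono) auto
    then show ?thesis using leg(3) by (simp add: mult.commute)
  qed
  have fu: "f u \<ge> 1" "f u \<ge> int (cnt V (\<not> b)) - d" using inv leg(1) b_def by auto
  have si: "Ur d (int (cnt V b)) (int (cnt V (\<not> b))) - Ur d (int (cnt V b) - 1) (int (cnt V (\<not> b)))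
      \<le> of_int (f u + d - int (cnt V (\<not> b)) - int (card W))"
    using step_ineq[of "int (cnt V b)" "int (cnt V (\<not> b))" "f u" d "int (card W)"] c1(3) fu Wbound
    unfolding D_def by simp
  have sym1: "Ur d (int (cnt V True)) (int (cnt V False)) = Ur d (int (cnt V b)) (int (cnt V (\<not> b)))"
    by (cases b) (simp_all add: Ur_sym)
  have sym2: "Ur d (int (cnt (V - {u}) True)) (int (cnt (V - {u}) False))
     = Ur d (int (cnt V b) - 1) (int (cnt V (\<not> b)))"
    using c1 by (cases b) (simp_all add: Ur_sym of_nat_diff)
  have "sig u = f u + d - int (cnt V (\<not> b))" unfolding sig_def b_def by simp
  then show ?case using IH sum1 sum2 si sym1 sym2 unfolding sig_def[symmetric]
    by (simp add: of_int_add)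
qed


lemma cnt_Knn: "cnt (Knn_vertices n) b = n"
proof -
  have "{x \<in> Knn_vertices n. fst x = b} = {b} \<times> {..<n}" by (auto simp: Knn_vertices_def)
  then show ?thesis by (simp add: cnt_def card_cartesian_product)
qed

theorem theorem4p6:
  fixes n :: nat and k :: int
  assumes "n \<ge> 1"
    and "k_removable (Knn_vertices n) Knn_edges k"
  shows "real_of_int k > real n - sqrt (2 * real n * (ln (real n) + 1))"
proof -
  have rem: "f_removable (Knn_vertices n) Knn_edges (\<lambda>_. k)"
    using assms(2) by (simp add: k_removable_def)
  have k1: "k \<ge> 1"
  proof (rule ccontr)
    assume kl: "\<not> k \<ge> 1"
    from rem show False
    proof cases
      case empty
      have "(True, 0) \<in> Knn_vertices n" using assms(1) by (simp add: Knn_vertices_def)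
      then show False using empty by simp
    next
      case (step u W)
      let ?x = "(\<not> fst u, 0::nat)"
      have "?x \<noteq> u" by (metis fst_conv)
      then have "?x \<in> Knn_vertices n - {u}" using assms(1) by (auto simp: Knn_vertices_def)
      then have "delsave_fun (Knn_vertices n) Knn_edges (\<lambda>_. k) u W ?x \<ge> 1"
        using step(1) unfolding delsave_legal_def by blast
      moreover have "delsave_fun (Knn_vertices n) Knn_edges (\<lambda>_. k) u W ?x \<le> k"
        by (simp add: delsave_fun_def)
      ultimately show False using kl by simp
    qed
  qed
  have sq0: "sqrt (2 * real n * (ln (real n) + 1)) \<ge> 0"
    using assms(1) by simp
  show ?thesis
  proof (cases "k > int n")
    case True
    then show ?thesis using sq0 by linarith
  next
    case False
    define d where "d = int n - k"
    have d0: "d \<ge> 0" using False d_def by simp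
    have fin: "finite (Knn_vertices n)" by (simp add: Knn_vertices_def)
    have inv: "\<forall>v\<in>Knn_vertices n. (\<lambda>_. k) v \<ge> 1 \<and> (\<lambda>_. k) v + d \<ge> int (cnt (Knn_vertices n) (\<not> fst v))"
      using k1 by (simp add: cnt_Knn d_def)
    have "Ur d (int (cnt (Knn_vertices n) True)) (int (cnt (Knn_vertices n) False))
      \<le> of_int (\<Sum>v\<in>Knn_vertices n. k + d - int (cnt (Knn_vertices n) (\<not> fst v)))"
      using main[OF rem refl fin d0 inv] by simp
    then have U: "Ur d (int n) (int n) \<le> 0" by (simp add: cnt_Knn d_def)
    have mx: "max (int n - d - 1) 0 = k - 1" using k1 d_def by simp
    have "Ur d (int n) (int n) = real_of_int ((d+1)*(2*int n) - int n * int n)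
        + Zr (of_int (k-1)) (of_int (k-1))"
      unfolding Ur_def mx by (simp add: algebra_simps)
    also have "... = (real_of_int d + 1)^2 - 2 * (real_of_int k - 1) * ln (real_of_int k)"
      unfolding Zr_def d_def by (simp add: algebra_simps power2_eq_square)
    finally have key: "(real_of_int d + 1)^2 \<le> 2 * (real_of_int k - 1) * ln (real_of_int k)"
      using U by simp
    have kn: "real_of_int k \<le> real n" using False by simp
    have k1r: "real_of_int k \<ge> 1" using k1 by simp
    have lnk0: "0 \<le> ln (real_of_int k)" using k1r by simp
    have "ln (real_of_int k) \<le> ln (real n)" using k1r kn by simp
    then have lnk: "0 \<le> ln (real_of_int k)" "ln (real_of_int k) \<le> ln (real n) + 1"
      using lnk0 by auto
    have "2 * (real_of_int k - 1) * ln (real_of_int k) \<le> 2 * real n * (ln (real n) + 1)"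
    proof -
      have "(real_of_int k - 1) * ln (real_of_int k) \<le> real n * (ln (real n) + 1)"
        using lnk k1r kn by (intro mult_mono) auto
      then show ?thesis by (simp only: mult.assoc)
    qed
    with key have "(real_of_int d + 1)^2 \<le> 2 * real n * (ln (real n) + 1)" by linarith
    then have "real_of_int d + 1 \<le> sqrt (2 * real n * (ln (real n) + 1))"
      by (rule real_le_rsqrt)
    then show ?thesis unfolding d_def by simp
  qed
qed

end
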